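(* For any finite graph $G$ and integer $k\ge0$: $\alpha(G)=k$ if and only if $G$ has an extended independent set of order $k$ but no extended independent set of any order larger than $k$.
   Context: Let $G$ be a graph. An extended independent set of order $k$ in $G$ is a set $K$ of $k+r$ vertices, for some integer $0\le r\le k$, such that: (1) the induced subgraph $G[K]$ has no cycles, has exactly $2r$ non-isolated vertices, and the subgraph of $G[K]$ induced on these $2r$ vertices has a perfect matching; and (2) for every vertex $v\notin K$, the set $\mathcal N(v)\cap K$ (where $\mathcal N(v)$ is the neighbourhood of $v$) contains at least two isolated vertices of $G[K]$, or contains at least two vertices of the same connected component of $G[K]$. $\alpha(G)$ is the independence number of $G$. *)

theory Defs
  imports Main
begin

definition fin_graph :: "'a set \<Rightarrow> ('a \<Rightarrow> 'a \<Rightarrow> bool) \<Rightarrow> bool" where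
  "fin_graph V E \<longleftrightarrow> finite V \<and> (\<forall>u v. E u v \<longrightarrow> E v u) \<and> (\<forall>u. \<not> E u u)
     \<and> (\<forall>u v. E u v \<longrightarrow> u \<in> V \<and> v \<in> V)"

definition nbhd :: "('a \<Rightarrow> 'a \<Rightarrow> bool) \<Rightarrow> 'a \<Rightarrow> 'a set" where
  "nbhd E v = {u. E v u}"

definition independent :: "'a set \<Rightarrow> ('a \<Rightarrow> 'a \<Rightarrow> bool) \<Rightarrow> 'a set \<Rightarrow> bool" where
  "independent V E S \<longleftrightarrow> S \<subseteq> V \<and> (\<forall>u\<in>S. \<forall>v\<in>S. \<not> E u v)"

definition indep_number :: "'a set \<Rightarrow> ('a \<Rightarrow> 'a \<Rightarrow> bool) \<Rightarrow> nat" where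
  "indep_number V E = Max {card S | S. independent V E S}"

definition has_cycle_in :: "('a \<Rightarrow> 'a \<Rightarrow> bool) \<Rightarrow> 'a set \<Rightarrow> bool" where
  "has_cycle_in E K \<longleftrightarrow> (\<exists>cs. length cs \<ge> 3 \<and> distinct cs \<and> set cs \<subseteq> K
     \<and> (\<forall>i. Suc i < length cs \<longrightarrow> E (cs ! i) (cs ! Suc i))
     \<and> E (last cs) (hd cs))"

definition isolated_in :: "('a \<Rightarrow> 'a \<Rightarrow> bool) \<Rightarrow> 'a set \<Rightarrow> 'a set" where
  "isolated_in E K = {v \<in> K. \<forall>u\<in>K. \<not> E v u}"

definition nonisolated_in :: "('a \<Rightarrow> 'a \<Rightarrow> bool) \<Rightarrow> 'a set \<Rightarrow> 'a set" where
  "nonisolated_in E K = {v \<in> K. \<exists>u\<in>K. E v u}"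

definition has_perfect_matching :: "('a \<Rightarrow> 'a \<Rightarrow> bool) \<Rightarrow> 'a set \<Rightarrow> bool" where
  "has_perfect_matching E N \<longleftrightarrow> (\<exists>M. (\<forall>e\<in>M. \<exists>u v. e = {u, v} \<and> u \<in> N \<and> v \<in> N \<and> E u v)
     \<and> (\<forall>e\<in>M. \<forall>e'\<in>M. e \<noteq> e' \<longrightarrow> e \<inter> e' = {}) \<and> \<Union>M = N)"

definition same_comp :: "('a \<Rightarrow> 'a \<Rightarrow> bool) \<Rightarrow> 'a set \<Rightarrow> 'a \<Rightarrow> 'a \<Rightarrow> bool" where
  "same_comp E K u w \<longleftrightarrow> u \<in> K \<and> w \<in> K \<and> (\<lambda>x y. x \<in> K \<and> y \<in> K \<and> E x y)\<^sup>*\<^sup>* u w"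

definition ext_indep_set :: "'a set \<Rightarrow> ('a \<Rightarrow> 'a \<Rightarrow> bool) \<Rightarrow> nat \<Rightarrow> 'a set \<Rightarrow> bool" where
  "ext_indep_set V E k K \<longleftrightarrow> K \<subseteq> V \<and> (\<exists>r. r \<le> k \<and> card K = k + r
     \<and> \<not> has_cycle_in E K
     \<and> card (nonisolated_in E K) = 2 * r
     \<and> has_perfect_matching E (nonisolated_in E K)
     \<and> (\<forall>v \<in> V - K.
          (\<exists>a b. a \<noteq> b \<and> a \<in> nbhd E v \<inter> isolated_in E K \<and> b \<in> nbhd E v \<inter> isolated_in E K)
        \<or> (\<exists>a b. a \<noteq> b \<and> a \<in> nbhd E v \<inter> K \<and> b \<in> nbhd E v \<inter> K \<and> same_comp E K a b)))"

end

theory Submission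
  imports Defs
begin


definition sympath :: "('a \<Rightarrow> 'a \<Rightarrow> bool) \<Rightarrow> 'a set \<Rightarrow> 'a list \<Rightarrow> bool" where
  "sympath E N cs \<longleftrightarrow> distinct cs \<and> set cs \<subseteq> N \<and> (\<forall>i. Suc i < length cs \<longrightarrow> E (cs ! i) (cs ! Suc i))"

lemma sympath_rev:
  assumes sym: "\<forall>u v. E u v \<longrightarrow> E v u" and p: "sympath E N cs"
  shows "sympath E N (rev cs)"
  unfolding sympath_def
proof (intro conjI allI impI)
  show "distinct (rev cs)" "set (rev cs) \<subseteq> N" using p by (auto simp: sympath_def)
  fix i assume i: "Suc i < length (rev cs)"
  have "E (cs ! (length cs - Suc (Suc i))) (cs ! Suc (length cs - Suc (Suc i)))"
    using p i by (auto simp: sympath_def)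
  moreover have "Suc (length cs - Suc (Suc i)) = length cs - Suc i" using i by simp
  ultimately show "E (rev cs ! i) (rev cs ! Suc i)" using i sym by (simp add: rev_nth)
qed

lemma hd_leaf:
  assumes sym: "\<forall>u v. E u v \<longrightarrow> E v u" and irr: "\<forall>u. \<not> E u u"
    and acyc: "\<not> has_cycle_in E N"
    and p: "sympath E N cs" and mx: "\<forall>ds. sympath E N ds \<longrightarrow> length ds \<le> length cs"
    and ne: "cs \<noteq> []" and w: "w \<in> N" "E (hd cs) w"
  shows "length cs \<ge> 2 \<and> w = cs ! 1"
proof (cases "w \<in> set cs")
  case False
  have "sympath E N (w # cs)"
    using p False w ne sym unfolding sympath_def
    by (auto simp: nth_Cons split: nat.splits) (metis hd_conv_nth)
  with mx show ?thesis by fastforce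
next
  case True
  then obtain i where i: "i < length cs" "w = cs ! i" by (auto simp: in_set_conv_nth)
  have "i \<noteq> 0" using i w irr ne by (metis hd_conv_nth)
  moreover have "\<not> i \<ge> 2"
  proof
    assume i2: "i \<ge> 2"
    have "has_cycle_in E N"
      unfolding has_cycle_in_def
    proof (intro exI[of _ "take (Suc i) cs"] conjI allI impI)
      show "3 \<le> length (take (Suc i) cs)" using i i2 by simp
      show "distinct (take (Suc i) cs)" using p by (simp add: sympath_def)
      show "set (take (Suc i) cs) \<subseteq> N" using p by (meson order_trans set_take_subset sympath_def)
      fix j assume "Suc j < length (take (Suc i) cs)"
      then show "E (take (Suc i) cs ! j) (take (Suc i) cs ! Suc j)" using p by (simp add: sympath_def)
    next
      have "last (take (Suc i) cs) = w" using i by (subst last_conv_nth) (auto simp: min_def intro: arg_cong[where f="(!) cs"])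
      moreover have "hd (take (Suc i) cs) = hd cs" using ne by simp
      ultimately show "E (last (take (Suc i) cs)) (hd (take (Suc i) cs))" using w sym by simp
    qed
    with acyc show False by simp
  qed
  ultimately have "i = 1" by simp
  then show ?thesis using i by simp
qed

lemma seg:
  assumes "\<forall>t. a \<le> t \<longrightarrow> t \<le> b \<longrightarrow> cs ! t \<in> K"
    and "\<forall>t. a \<le> t \<longrightarrow> t < b \<longrightarrow> E (cs ! t) (cs ! Suc t)"
    and "a \<le> b"
  shows "(\<lambda>x y. x \<in> K \<and> y \<in> K \<and> E x y)\<^sup>*\<^sup>* (cs ! a) (cs ! b)"
  using assms
proof (induction b)
  case 0
  then show ?case by simp
next
  case (Suc b)
  show ?case
  proof (cases "a = Suc b")
    case True then show ?thesis by simp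
  next
    case False
    then have "a \<le> b" using Suc by simp
    then have "(\<lambda>x y. x \<in> K \<and> y \<in> K \<and> E x y)\<^sup>*\<^sup>* (cs ! a) (cs ! b)"
      using Suc.IH Suc.prems(1,2) by (meson le_Suc_eq less_Suc_eq)
    moreover have "cs ! b \<in> K" "cs ! Suc b \<in> K" "E (cs ! b) (cs ! Suc b)"
      using Suc \<open>a \<le> b\<close> by auto
    ultimately show ?thesis by (simp add: rtranclp.rtrancl_into_rtrancl)
  qed
qed

lemma same_comp_mono:
  assumes "K' \<subseteq> K" "same_comp E K' a b" shows "same_comp E K a b"
proof -
  have "(\<lambda>x y. x \<in> K' \<and> y \<in> K' \<and> E x y) \<le> (\<lambda>x y. x \<in> K \<and> y \<in> K \<and> E x y)"
    using assms(1) by auto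
  then have "(\<lambda>x y. x \<in> K' \<and> y \<in> K' \<and> E x y)\<^sup>*\<^sup>* \<le> (\<lambda>x y. x \<in> K \<and> y \<in> K \<and> E x y)\<^sup>*\<^sup>*"
    by (rule rtranclp_mono)
  then show ?thesis using assms unfolding same_comp_def
    by (auto dest: predicate2D)
qed

lemma cycle_mono:
  assumes "K' \<subseteq> K" "has_cycle_in E K'" shows "has_cycle_in E K"
proof -
  obtain cs where "length cs \<ge> 3 \<and> distinct cs \<and> set cs \<subseteq> K'
     \<and> (\<forall>i. Suc i < length cs \<longrightarrow> E (cs ! i) (cs ! Suc i)) \<and> E (last cs) (hd cs)"
    using assms(2) unfolding has_cycle_in_def by blast
  then show ?thesis unfolding has_cycle_in_def using assms(1) by (intro exI[of _ cs]) auto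
qed

lemma longest_path:
  assumes "finite N" "a \<in> N"
  shows "\<exists>cs. sympath E N cs \<and> cs \<noteq> [] \<and> (\<forall>ds. sympath E N ds \<longrightarrow> length ds \<le> length cs)"
proof -
  have p1: "sympath E N [a]" using assms by (simp add: sympath_def)
  have "\<forall>ds. sympath E N ds \<longrightarrow> length ds < card N + 1"
  proof (intro allI impI)
    fix ds assume "sympath E N ds"
    then have "length ds = card (set ds)" "set ds \<subseteq> N" by (auto simp: sympath_def distinct_card)
    then have "length ds \<le> card N" using assms(1) card_mono by metis
    then show "length ds < card N + 1" by simp
  qed
  from Lattices_Big.ex_has_greatest_nat[OF p1 this] obtain cs where
    "sympath E N cs" "\<forall>ds. sympath E N ds \<longrightarrow> length ds \<le> length cs" by blast
  moreover then have "length [a] \<le> length cs" using p1 by blast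
  then have "cs \<noteq> []" by auto
  ultimately show ?thesis by blast
qed



lemma match_partner:
  assumes sym: "\<forall>u v. E u v \<longrightarrow> E v u"
    and M: "\<forall>e\<in>M. \<exists>u v. e = {u, v} \<and> u \<in> N \<and> v \<in> N \<and> E u v" "\<Union>M = N"
    and x: "x \<in> N"
  shows "\<exists>y. y \<in> N \<and> E x y \<and> {x, y} \<in> M"
proof -
  obtain e where e: "e \<in> M" "x \<in> e" using x M(2) by blast
  then obtain u v where uv: "e = {u, v}" "u \<in> N" "v \<in> N" "E u v" using M(1) by blast
  show ?thesis
  proof (cases "x = u")
    case True then show ?thesis using uv e by blast
  next
    case False then have "x = v" using uv e by blast
    then show ?thesis using uv e sym by (metis insert_commute)
  qed
qed

lemma match_indep:
  assumes sym: "\<forall>u v. E u v \<longrightarrow> E v u" and irr: "\<forall>u. \<not> E u u"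
  shows "finite N \<Longrightarrow> \<not> has_cycle_in E N \<Longrightarrow> has_perfect_matching E N
    \<Longrightarrow> (\<forall>a\<in>U. \<forall>b\<in>U. a \<noteq> b \<longrightarrow> \<not> same_comp E N a b)
    \<Longrightarrow> \<exists>I \<subseteq> N. (\<forall>x\<in>I. \<forall>y\<in>I. \<not> E x y) \<and> I \<inter> U = {} \<and> 2 * card I = card N"
proof (induction "card N" arbitrary: N rule: less_induct)
  case less
  show ?case
  proof (cases "N = {}")
    case True then show ?thesis by auto
  next
    case False
    then obtain a where a: "a \<in> N" by blast
    obtain M where M: "\<forall>e\<in>M. \<exists>u v. e = {u, v} \<and> u \<in> N \<and> v \<in> N \<and> E u v"
      "\<forall>e\<in>M. \<forall>e'\<in>M. e \<noteq> e' \<longrightarrow> e \<inter> e' = {}" "\<Union>M = N"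
      using less.prems(3) unfolding has_perfect_matching_def by blast
    obtain cs where cs: "sympath E N cs" "cs \<noteq> []" "\<forall>ds. sympath E N ds \<longrightarrow> length ds \<le> length cs"
      using longest_path[OF less.prems(1) a] by blast
    have hdN: "hd cs \<in> N" using cs unfolding sympath_def by auto
    have lastN: "last cs \<in> N" using cs unfolding sympath_def by auto
    have rcs: "sympath E N (rev cs)" "rev cs \<noteq> []" "\<forall>ds. sympath E N ds \<longrightarrow> length ds \<le> length (rev cs)"
      using cs sympath_rev[OF sym] by auto
    obtain y0 where "y0 \<in> N" "E (hd cs) y0" using match_partner[OF sym M(1,3) hdN] by blast
    then have len: "length cs \<ge> 2" using hd_leaf[OF sym irr less.prems(2) cs(1) cs(3) cs(2)] by blast
    have leafp: "\<forall>w\<in>N. E (hd cs) w \<longrightarrow> w = cs ! 1"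
      using hd_leaf[OF sym irr less.prems(2) cs(1) cs(3) cs(2)] by blast
    have leafq: "\<forall>w\<in>N. E (hd (rev cs)) w \<longrightarrow> w = rev cs ! 1"
      using hd_leaf[OF sym irr less.prems(2) rcs(1) rcs(3) rcs(2)] by blast
    have pq: "hd cs \<noteq> last cs"
    proof -
      have d: "distinct cs" using cs(1) unfolding sympath_def by simp
      have "cs ! 0 \<noteq> cs ! (length cs - 1)"
        using nth_eq_iff_index_eq[OF d, of 0 "length cs - 1"] len cs(2) by simp
      then show ?thesis using cs(2) by (simp add: hd_conv_nth last_conv_nth)
    qed
    have sc: "same_comp E N (hd cs) (last cs)"
    proof -
      have "(\<lambda>x y. x \<in> N \<and> y \<in> N \<and> E x y)\<^sup>*\<^sup>* (cs ! 0) (cs ! (length cs - 1))"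
        by (rule seg) (use cs(1) len in \<open>auto simp: sympath_def\<close>)
      then show ?thesis unfolding same_comp_def using hdN lastN cs(2)
        by (simp add: hd_conv_nth last_conv_nth)
    qed
    have "\<exists>x\<in>N. x \<notin> U \<and> (\<exists>z. \<forall>w\<in>N. E x w \<longrightarrow> w = z)"
    proof (cases "hd cs \<in> U")
      case True
      then have "last cs \<notin> U" using less.prems(4) pq sc by blast
      then show ?thesis using leafq lastN cs(2) by (metis hd_rev)
    next
      case False
      then show ?thesis using leafp hdN by blast
    qed
    then obtain x z where x: "x \<in> N" "x \<notin> U" and xz: "\<forall>w\<in>N. E x w \<longrightarrow> w = z" by blast
    obtain y where y: "y \<in> N" "E x y" "{x, y} \<in> M" using match_partner[OF sym M(1,3) x(1)] by blast
    have "y = z" using xz y(1,2) by blast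
    then have leaf: "\<forall>w\<in>N. E x w \<longrightarrow> w = y" using xz by blast
    have xy: "x \<noteq> y" using y irr by metis
    define N' where "N' = N - {x, y}"
    define M' where "M' = M - {{x, y}}"
    have dj: "e \<inter> {x, y} = {}" if "e \<in> M'" for e
    proof -
      have "e \<in> M" "e \<noteq> {x, y}" using that unfolding M'_def by auto
      then show ?thesis using M(2)[rule_format, OF _ y(3)] by blast
    qed
    have M'1: "\<forall>e\<in>M'. \<exists>u v. e = {u, v} \<and> u \<in> N' \<and> v \<in> N' \<and> E u v"
    proof
      fix e assume e: "e \<in> M'"
      then have "e \<inter> {x, y} = {}" by (rule dj)
      obtain u v where uv: "e = {u, v}" "u \<in> N" "v \<in> N" "E u v"
        using M(1) e unfolding M'_def by blast
      have "u \<in> N'" "v \<in> N'" using uv \<open>e \<inter> {x, y} = {}\<close> unfolding N'_def by auto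
      then show "\<exists>u v. e = {u, v} \<and> u \<in> N' \<and> v \<in> N' \<and> E u v"
        using uv by blast
    qed
    have M'2: "\<forall>e\<in>M'. \<forall>e'\<in>M'. e \<noteq> e' \<longrightarrow> e \<inter> e' = {}" using M(2) unfolding M'_def by (meson DiffD1)
    have M'3: "\<Union>M' = N'"
    proof
      show "\<Union>M' \<subseteq> N'"
      proof
        fix t assume "t \<in> \<Union>M'"
        then obtain e where e: "e \<in> M'" "t \<in> e" by blast
        have "e \<inter> {x, y} = {}" using dj e(1) by blast
        then show "t \<in> N'" using e M(3) unfolding M'_def N'_def by blast
      qed
      show "N' \<subseteq> \<Union>M'" using M(3) unfolding M'_def N'_def by blast
    qed
    have pm: "has_perfect_matching E N'" unfolding has_perfect_matching_def using M'1 M'2 M'3 by blast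
    have fin': "finite N'" using less.prems(1) unfolding N'_def by simp
    have sub: "N' \<subseteq> N" unfolding N'_def by blast
    have ac': "\<not> has_cycle_in E N'" using less.prems(2) cycle_mono[OF sub] by blast
    have U': "\<forall>a\<in>U. \<forall>b\<in>U. a \<noteq> b \<longrightarrow> \<not> same_comp E N' a b"
      using less.prems(4) same_comp_mono[OF sub] by blast
    have cardN': "card N' = card N - 2" using x(1) y(1) xy less.prems(1) unfolding N'_def
      by (simp add: card_Diff_subset)
    have "card N > 0" using x(1) less.prems(1) card_gt_0_iff by blast
    then have "card N' < card N" using cardN' by simp
    then obtain I' where I': "I' \<subseteq> N'" "\<forall>a\<in>I'. \<forall>b\<in>I'. \<not> E a b" "I' \<inter> U = {}" "2 * card I' = card N'"
      using less.hyps[OF _ fin' ac' pm U'] by blast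
    have xI': "x \<notin> I'" "y \<notin> I'" using I'(1) unfolding N'_def by auto
    have finI': "finite I'" using I'(1) fin' finite_subset by blast
    have "insert x I' \<subseteq> N" using I'(1) x(1) unfolding N'_def by blast
    moreover have "\<forall>a\<in>insert x I'. \<forall>b\<in>insert x I'. \<not> E a b"
    proof (intro ballI)
      fix a b assume ab: "a \<in> insert x I'" "b \<in> insert x I'"
      have xn: "\<forall>b\<in>I'. \<not> E x b" using leaf xI'(2) I'(1) unfolding N'_def by blast
      have xn2: "\<forall>b\<in>I'. \<not> E b x" using xn sym by blast
      show "\<not> E a b"
      proof (cases "a = x")
        case True
        then show ?thesis using ab(2) xn irr by auto
      next
        case False
        then have "a \<in> I'" using ab(1) by simp
        then show ?thesis using ab(2) xn2 I'(2) by auto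
      qed
    qed
    moreover have "insert x I' \<inter> U = {}" using I'(3) x(2) by blast
    moreover have "2 * card (insert x I') = card N"
    proof -
      have "card {x, y} \<le> card N" using card_mono[OF less.prems(1), of "{x, y}"] x(1) y(1) by blast
      then have "card N \<ge> 2" using xy by simp
      then show ?thesis using finI' xI'(1) I'(4) cardN' by simp
    qed
    ultimately show ?thesis by blast
  qed
qed



lemma acyc_insert:
  assumes sym: "\<forall>u v. E u v \<longrightarrow> E v u" and acyc: "\<not> has_cycle_in E K" and vK: "v \<notin> K"
    and nosc: "\<forall>a\<in>K. \<forall>b\<in>K. a \<noteq> b \<longrightarrow> E v a \<longrightarrow> E v b \<longrightarrow> \<not> same_comp E K a b"
  shows "\<not> has_cycle_in E (insert v K)"
proof
  assume "has_cycle_in E (insert v K)"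
  then obtain cs where cs: "length cs \<ge> 3" "distinct cs" "set cs \<subseteq> insert v K"
     "\<forall>i. Suc i < length cs \<longrightarrow> E (cs ! i) (cs ! Suc i)" "E (last cs) (hd cs)"
    unfolding has_cycle_in_def by blast
  define n where "n = length cs"
  have ne: "cs \<noteq> []" using cs(1) by auto
  have wrap: "E (cs ! (n - 1)) (cs ! 0)" using cs(5) ne unfolding n_def by (simp add: hd_conv_nth last_conv_nth)
  show False
  proof (cases "v \<in> set cs")
    case False
    then have "set cs \<subseteq> K" using cs(3) by blast
    then have "has_cycle_in E K" unfolding has_cycle_in_def using cs by blast
    with acyc show False by simp
  next
    case True
    then obtain j where j: "j < n" "cs ! j = v" unfolding n_def by (auto simp: in_set_conv_nth)
    have inK: "cs ! t \<in> K" if "t < n" "t \<noteq> j" for t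
    proof -
      have "cs ! t \<noteq> cs ! j" using nth_eq_iff_index_eq[OF cs(2)] that j(1) unfolding n_def by blast
      moreover have "cs ! t \<in> insert v K" using cs(3) that(1) unfolding n_def by (meson nth_mem subsetD)
      ultimately show ?thesis using j(2) by simp
    qed
    let ?R = "\<lambda>x y. x \<in> K \<and> y \<in> K \<and> E x y"
    have key: "False" if pq: "p < n" "q < n" "p \<noteq> q" "p \<noteq> j" "q \<noteq> j" "E v (cs ! p)" "E v (cs ! q)"
      "?R\<^sup>*\<^sup>* (cs ! p) (cs ! q)" for p q
    proof -
      have "cs ! p \<noteq> cs ! q" using nth_eq_iff_index_eq[OF cs(2)] pq unfolding n_def by blast
      moreover have "same_comp E K (cs ! p) (cs ! q)" unfolding same_comp_def using pq inK by blast
      moreover have "cs ! p \<in> K" "cs ! q \<in> K" using inK pq by auto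
      ultimately show False using nosc pq(6,7) by blast
    qed
    have adj: "E (cs ! t) (cs ! Suc t)" if "Suc t < n" for t using cs(4) that unfolding n_def by blast
    have n3: "n \<ge> 3" using cs(1) unfolding n_def by simp
    consider "j = 0" | "j = n - 1" | "0 < j \<and> j < n - 1" using j(1) by linarith
    then show False
    proof cases
      case 1
      have s: "?R\<^sup>*\<^sup>* (cs ! 1) (cs ! (n - 1))"
        by (rule seg) (use inK adj 1 n3 in auto)
      have e1: "E v (cs ! 1)" using adj[of 0] n3 1 j(2) by simp
      have e2: "E v (cs ! (n - 1))" using wrap 1 j(2) sym by metis
      show False
        by (rule key[OF _ _ _ _ _ e1 e2 s]) (use 1 n3 in auto)
    next
      case 2
      have s: "?R\<^sup>*\<^sup>* (cs ! 0) (cs ! (n - 2))"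
        by (rule seg) (use inK adj 2 n3 in auto)
      have e: "E (cs ! (n - 2)) (cs ! Suc (n - 2))" using adj[of "n - 2"] n3 by simp
      have "Suc (n - 2) = n - 1" using n3 by simp
      then have e2: "E v (cs ! (n - 2))" using e 2 j(2) sym by metis
      have e1: "E v (cs ! 0)" using wrap 2 j(2) by simp
      show False
        by (rule key[OF _ _ _ _ _ e1 e2 s]) (use 2 n3 in auto)
    next
      case 3
      have s1: "?R\<^sup>*\<^sup>* (cs ! (Suc j)) (cs ! (n - 1))"
        by (rule seg) (use inK adj 3 n3 in auto)
      have s2: "?R\<^sup>*\<^sup>* (cs ! 0) (cs ! (j - 1))"
        by (rule seg) (use inK adj 3 n3 in auto)
      have w: "?R (cs ! (n - 1)) (cs ! 0)" using inK wrap 3 n3 by auto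
      have s: "?R\<^sup>*\<^sup>* (cs ! (Suc j)) (cs ! (j - 1))"
        using rtranclp_trans[OF rtranclp.rtrancl_into_rtrancl[OF s1 w] s2] .
      have "Suc j < n" using 3 by linarith
      then have e1: "E v (cs ! Suc j)" using adj[of j] j(2) by simp
      have e2: "E (cs ! (j - 1)) (cs ! Suc (j - 1))" using adj[of "j - 1"] 3 j(1) by simp
      have "Suc (j - 1) = j" using 3 by simp
      then have e3: "E v (cs ! (j - 1))" using e2 sym j(2) by metis
      show False
        by (rule key[OF _ _ _ _ _ e1 e3 s]) (use 3 in auto)
    qed
  qed
qed



definition preE :: "'a set \<Rightarrow> ('a \<Rightarrow> 'a \<Rightarrow> bool) \<Rightarrow> nat \<Rightarrow> nat \<Rightarrow> 'a set \<Rightarrow> bool" where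
  "preE V E k r K \<longleftrightarrow> K \<subseteq> V \<and> r \<le> k \<and> card K = k + r \<and> \<not> has_cycle_in E K
     \<and> card (nonisolated_in E K) = 2 * r \<and> has_perfect_matching E (nonisolated_in E K)"

lemma iso_card:
  assumes "finite K"
  shows "card (isolated_in E K) + card (nonisolated_in E K) = card K"
proof -
  have "isolated_in E K \<union> nonisolated_in E K = K" "isolated_in E K \<inter> nonisolated_in E K = {}"
    unfolding isolated_in_def nonisolated_in_def by auto
  moreover have "finite (isolated_in E K)" "finite (nonisolated_in E K)"
    using assms unfolding isolated_in_def nonisolated_in_def by auto
  ultimately show ?thesis by (metis card_Un_disjoint)
qed

lemma indep_le:
  assumes "fin_graph V E" "independent V E S"
  shows "card S \<le> indep_number V E"
proof -
  have fV: "finite V" using assms(1) unfolding fin_graph_def by simp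
  have "{card S | S. independent V E S} \<subseteq> card ` Pow V" unfolding independent_def by auto
  then have "finite {card S | S. independent V E S}" using fV finite_subset by blast
  then show ?thesis unfolding indep_number_def using assms(2) by (intro Max_ge) auto
qed

lemma indep_max:
  assumes "fin_graph V E"
  shows "\<exists>S. independent V E S \<and> card S = indep_number V E"
proof -
  have fV: "finite V" using assms(1) unfolding fin_graph_def by simp
  have "{card S | S. independent V E S} \<subseteq> card ` Pow V" unfolding independent_def by auto
  then have "finite {card S | S. independent V E S}" using fV finite_subset by blast
  moreover have "independent V E {}" unfolding independent_def by simp
  then have "{card S | S. independent V E S} \<noteq> {}" by blast
  ultimately have "indep_number V E \<in> {card S | S. independent V E S}"
    unfolding indep_number_def by (rule Max_in)
  then show ?thesis by auto
qed

lemma iso_I_indep: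
  assumes sym: "\<forall>u v. E u v \<longrightarrow> E v u" and I: "I \<subseteq> K" "\<forall>x\<in>I. \<forall>y\<in>I. \<not> E x y"
  shows "\<forall>a\<in>isolated_in E K \<union> I. \<forall>b\<in>isolated_in E K \<union> I. \<not> E a b"
proof (intro ballI)
  fix a b assume a: "a \<in> isolated_in E K \<union> I" and b: "b \<in> isolated_in E K \<union> I"
  have aK: "a \<in> K" "b \<in> K" using a b I(1) unfolding isolated_in_def by auto
  show "\<not> E a b"
  proof (cases "a \<in> isolated_in E K")
    case True then show ?thesis using aK unfolding isolated_in_def by blast
  next
    case False
    show ?thesis
    proof (cases "b \<in> isolated_in E K")
      case True
      then have "\<not> E b a" using aK unfolding isolated_in_def by blast
      then show ?thesis using sym by blast
    next
      case False
      then show ?thesis using \<open>a \<notin> isolated_in E K\<close> a b I(2) by blast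
    qed
  qed
qed

lemma iso_I_card:
  assumes "finite K" "I \<subseteq> nonisolated_in E K"
  shows "card (isolated_in E K \<union> I) = card (isolated_in E K) + card I"
proof -
  have "isolated_in E K \<inter> I = {}" using assms(2) unfolding isolated_in_def nonisolated_in_def by auto
  moreover have "finite (isolated_in E K)" "finite I"
    using assms unfolding isolated_in_def nonisolated_in_def by (auto intro: finite_subset)
  ultimately show ?thesis by (simp add: card_Un_disjoint)
qed

lemma noniso_sub: "nonisolated_in E K \<subseteq> K" unfolding nonisolated_in_def by auto

lemma pre_bound:
  assumes G: "fin_graph V E" and P: "preE V E k r K"
  shows "k \<le> indep_number V E"
proof -
  have sym: "\<forall>u v. E u v \<longrightarrow> E v u" and irr: "\<forall>u. \<not> E u u" and fV: "finite V"
    using G unfolding fin_graph_def by blast+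
  have KV: "K \<subseteq> V" and r: "r \<le> k" and cK: "card K = k + r" and ac: "\<not> has_cycle_in E K"
    and cN: "card (nonisolated_in E K) = 2 * r" and pm: "has_perfect_matching E (nonisolated_in E K)"
    using P unfolding preE_def by auto
  have fK: "finite K" using KV fV finite_subset by blast
  have fN: "finite (nonisolated_in E K)" by (rule finite_subset[OF noniso_sub fK])
  have acN: "\<not> has_cycle_in E (nonisolated_in E K)" using ac cycle_mono[OF noniso_sub[of E K]] by blast
  obtain I where I: "I \<subseteq> nonisolated_in E K" "\<forall>x\<in>I. \<forall>y\<in>I. \<not> E x y" "2 * card I = card (nonisolated_in E K)"
    using match_indep[OF sym irr fN acN pm, of "{}"] by auto
  have IK: "I \<subseteq> K" using I(1) noniso_sub[of E K] by blast
  have "independent V E (isolated_in E K \<union> I)"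
  proof -
    have "isolated_in E K \<union> I \<subseteq> V" using KV IK unfolding isolated_in_def by blast
    then show ?thesis unfolding independent_def using iso_I_indep[OF sym IK I(2)] by blast
  qed
  then have "card (isolated_in E K \<union> I) \<le> indep_number V E" using indep_le[OF G] by blast
  moreover have "card (isolated_in E K \<union> I) = k"
    using iso_I_card[OF fK I(1)] iso_card[OF fK, of E] I(3) cN cK by simp
  ultimately show ?thesis by simp
qed

lemma pre_ext:
  assumes "preE V E k r K"
    and "\<forall>v \<in> V - K.
          (\<exists>a b. a \<noteq> b \<and> a \<in> nbhd E v \<inter> isolated_in E K \<and> b \<in> nbhd E v \<inter> isolated_in E K)
        \<or> (\<exists>a b. a \<noteq> b \<and> a \<in> nbhd E v \<inter> K \<and> b \<in> nbhd E v \<inter> K \<and> same_comp E K a b)"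
  shows "ext_indep_set V E k K"
  using assms unfolding preE_def ext_indep_set_def by blast

lemma ext_pre:
  assumes "ext_indep_set V E k K" shows "\<exists>r. preE V E k r K"
  using assms unfolding preE_def ext_indep_set_def by blast

lemma exists_ext:
  assumes G: "fin_graph V E"
  shows "\<exists>K. ext_indep_set V E (indep_number V E) K"
proof -
  have sym: "\<forall>u v. E u v \<longrightarrow> E v u" and irr: "\<forall>u. \<not> E u u" and fV: "finite V"
    using G unfolding fin_graph_def by blast+
  define \<alpha> where "\<alpha> = indep_number V E"
  obtain S where S: "independent V E S" "card S = \<alpha>" using indep_max[OF G] unfolding \<alpha>_def by blast
  have SV: "S \<subseteq> V" and Si: "\<forall>u\<in>S. \<forall>v\<in>S. \<not> E u v" using S(1) unfolding independent_def by blast+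
  have nS: "nonisolated_in E S = {}" using Si unfolding nonisolated_in_def by blast
  have acS: "\<not> has_cycle_in E S"
  proof
    assume "has_cycle_in E S"
    then obtain cs where cs: "length cs \<ge> 3" "set cs \<subseteq> S" "\<forall>i. Suc i < length cs \<longrightarrow> E (cs ! i) (cs ! Suc i)"
      unfolding has_cycle_in_def by blast
    have "E (cs ! 0) (cs ! 1)" using cs(1,3) by simp
    moreover have "cs ! 0 \<in> S" "cs ! 1 \<in> S" proof -
      have "0 < length cs" "1 < length cs" using cs(1) by auto
      then show "cs ! 0 \<in> S" "cs ! 1 \<in> S" using cs(2) nth_mem[of 0 cs] nth_mem[of 1 cs] by blast+
    qed
    ultimately show False using Si by blast
  qed
  have pmS: "has_perfect_matching E {}" unfolding has_perfect_matching_def by (intro exI[of _ "{}"]) simp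
  have P0: "\<exists>K. preE V E \<alpha> 0 K" unfolding preE_def using SV S(2) acS nS pmS by (intro exI[of _ S]) simp
  have bnd: "\<forall>y. (\<exists>K. preE V E \<alpha> y K) \<longrightarrow> y \<le> \<alpha>" unfolding preE_def by blast
  obtain r where r: "\<exists>K. preE V E \<alpha> r K" and rmax: "\<forall>y. (\<exists>K. preE V E \<alpha> y K) \<longrightarrow> y \<le> r"
    using Nat.ex_has_greatest_nat[of "\<lambda>r. \<exists>K. preE V E \<alpha> r K", OF P0 bnd] by blast
  obtain K where K: "preE V E \<alpha> r K" using r by blast
  have KV: "K \<subseteq> V" and rle: "r \<le> \<alpha>" and cK: "card K = \<alpha> + r" and ac: "\<not> has_cycle_in E K"
    and cN: "card (nonisolated_in E K) = 2 * r" and pm: "has_perfect_matching E (nonisolated_in E K)"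
    using K unfolding preE_def by blast+
  have fK: "finite K" using KV fV finite_subset by blast
  have fN: "finite (nonisolated_in E K)" by (rule finite_subset[OF noniso_sub fK])
  have ciso: "card (isolated_in E K) + 2 * r = \<alpha> + r" using iso_card[OF fK, of E] cN cK by simp
  have "\<forall>v \<in> V - K.
          (\<exists>a b. a \<noteq> b \<and> a \<in> nbhd E v \<inter> isolated_in E K \<and> b \<in> nbhd E v \<inter> isolated_in E K)
        \<or> (\<exists>a b. a \<noteq> b \<and> a \<in> nbhd E v \<inter> K \<and> b \<in> nbhd E v \<inter> K \<and> same_comp E K a b)"
  proof (rule ballI, rule ccontr)
    fix v assume v: "v \<in> V - K"
    assume "\<not> ((\<exists>a b. a \<noteq> b \<and> a \<in> nbhd E v \<inter> isolated_in E K \<and> b \<in> nbhd E v \<inter> isolated_in E K)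
        \<or> (\<exists>a b. a \<noteq> b \<and> a \<in> nbhd E v \<inter> K \<and> b \<in> nbhd E v \<inter> K \<and> same_comp E K a b))"
    then have c1: "\<forall>a b. a \<in> isolated_in E K \<longrightarrow> b \<in> isolated_in E K \<longrightarrow> E v a \<longrightarrow> E v b \<longrightarrow> a = b"
      and c2: "\<forall>a b. a \<in> K \<longrightarrow> b \<in> K \<longrightarrow> a \<noteq> b \<longrightarrow> E v a \<longrightarrow> E v b \<longrightarrow> \<not> same_comp E K a b"
      unfolding nbhd_def by blast+
    have vK: "v \<notin> K" "v \<in> V" using v by auto
    show False
    proof (cases "\<exists>w \<in> isolated_in E K. E v w")
      case True
      then obtain w where w: "w \<in> isolated_in E K" "E v w" by blast
      have wK: "w \<in> K" using w(1) unfolding isolated_in_def by blast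
      have wN: "w \<notin> nonisolated_in E K" using w(1) unfolding isolated_in_def nonisolated_in_def by blast
      have vN: "v \<notin> nonisolated_in E K" using vK noniso_sub[of E K] by blast
      have vw: "v \<noteq> w" using vK wK by blast
      define K' where "K' = insert v K"
      have N': "nonisolated_in E K' = insert v (insert w (nonisolated_in E K))"
      proof (rule set_eqI)
        fix x
        show "x \<in> nonisolated_in E K' \<longleftrightarrow> x \<in> insert v (insert w (nonisolated_in E K))"
        proof
          assume x: "x \<in> nonisolated_in E K'"
          then obtain u where u: "x \<in> K'" "u \<in> K'" "E x u" unfolding nonisolated_in_def by blast
          show "x \<in> insert v (insert w (nonisolated_in E K))"
          proof (cases "x = v")
            case True then show ?thesis by simp
          next
            case False
            then have xK: "x \<in> K" using u(1) unfolding K'_def by simp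
            show ?thesis
            proof (cases "u = v")
              case True
              then have Evx: "E v x" using u(3) sym by blast
              show ?thesis
              proof (cases "x \<in> isolated_in E K")
                case True
                then have "x = w" using c1 w Evx by blast
                then show ?thesis by simp
              next
                case False
                then show ?thesis using xK unfolding isolated_in_def nonisolated_in_def by blast
              qed
            next
              case False
              then have "u \<in> K" using u(2) unfolding K'_def by simp
              then show ?thesis using xK u(3) unfolding nonisolated_in_def by blast
            qed
          qed
        next
          assume x: "x \<in> insert v (insert w (nonisolated_in E K))"
          have Ewv: "E w v" using w(2) sym by blast
          show "x \<in> nonisolated_in E K'"
          proof -
            consider "x = v" | "x = w" | "x \<in> nonisolated_in E K" using x by blast
            then show ?thesis
            proof cases
              case 1 then show ?thesis using w(2) wK unfolding nonisolated_in_def K'_def by blast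
            next
              case 2 then show ?thesis using Ewv wK unfolding nonisolated_in_def K'_def by blast
            next
              case 3 then show ?thesis unfolding nonisolated_in_def K'_def by blast
            qed
          qed
        qed
      qed
      obtain M where M: "\<forall>e\<in>M. \<exists>a b. e = {a, b} \<and> a \<in> nonisolated_in E K \<and> b \<in> nonisolated_in E K \<and> E a b"
        "\<forall>e\<in>M. \<forall>e'\<in>M. e \<noteq> e' \<longrightarrow> e \<inter> e' = {}" "\<Union>M = nonisolated_in E K"
        using pm unfolding has_perfect_matching_def by (elim exE conjE) (rule that)
      have eN: "e \<subseteq> nonisolated_in E K" if "e \<in> M" for e using that M(3) by blast
      have pm': "has_perfect_matching E (nonisolated_in E K')"
        unfolding has_perfect_matching_def N'
      proof (intro exI[of _ "insert {v, w} M"] conjI)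
        show "\<forall>e\<in>insert {v, w} M. \<exists>a b. e = {a, b} \<and> a \<in> insert v (insert w (nonisolated_in E K))
             \<and> b \<in> insert v (insert w (nonisolated_in E K)) \<and> E a b"
        proof
          fix e assume e: "e \<in> insert {v, w} M"
          show "\<exists>a b. e = {a, b} \<and> a \<in> insert v (insert w (nonisolated_in E K))
             \<and> b \<in> insert v (insert w (nonisolated_in E K)) \<and> E a b"
          proof (cases "e = {v, w}")
            case True
            then show ?thesis using w(2) by (intro exI[of _ v] exI[of _ w]) simp
          next
            case False
            then have "e \<in> M" using e by simp
            then obtain a b where "e = {a, b}" "a \<in> nonisolated_in E K" "b \<in> nonisolated_in E K" "E a b"
              using M(1) by meson
            then show ?thesis by (intro exI[of _ a] exI[of _ b]) simp
          qed
        qed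
        have dj: "e \<inter> {v, w} = {}" if "e \<in> M" for e using eN[OF that] vN wN by blast
        show "\<forall>e\<in>insert {v, w} M. \<forall>e'\<in>insert {v, w} M. e \<noteq> e' \<longrightarrow> e \<inter> e' = {}"
        proof (intro ballI impI)
          fix e e' assume e: "e \<in> insert {v, w} M" "e' \<in> insert {v, w} M" "e \<noteq> e'"
          show "e \<inter> e' = {}"
          proof (cases "e = {v, w}")
            case True
            then have "e' \<in> M" using e by simp
            then show ?thesis using dj True by blast
          next
            case False
            then have eM: "e \<in> M" using e by simp
            show ?thesis
            proof (cases "e' = {v, w}")
              case True then show ?thesis using dj eM by blast
            next
              case False
              then have "e' \<in> M" using e by simp
              then show ?thesis using M(2) eM e(3) by blast
            qed
          qed
        qed
        show "\<Union> (insert {v, w} M) = insert v (insert w (nonisolated_in E K))"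
          using M(3) by blast
      qed
      have ac': "\<not> has_cycle_in E K'" unfolding K'_def
        by (rule acyc_insert[OF sym ac vK(1)]) (use c2 in blast)
      have "isolated_in E K \<noteq> {}" using w(1) by blast
      moreover have "finite (isolated_in E K)" using fK unfolding isolated_in_def by simp
      ultimately have "card (isolated_in E K) \<ge> 1" by (simp add: Suc_leI card_gt_0_iff)
      then have r1: "r + 1 \<le> \<alpha>" using ciso by simp
      have cK': "card K' = \<alpha> + (r + 1)" using fK vK cK unfolding K'_def by simp
      have cN': "card (nonisolated_in E K') = 2 * (r + 1)"
        unfolding N' using fN vN wN vw cN by simp
      have "preE V E \<alpha> (r + 1) K'" unfolding preE_def
        using KV vK(2) r1 cK' ac' cN' pm' unfolding K'_def by blast
      then have "r + 1 \<le> r" using rmax by blast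
      then show False by simp
    next
      case False
      define U where "U = {a. E v a}"
      have acN: "\<not> has_cycle_in E (nonisolated_in E K)" using ac cycle_mono[OF noniso_sub[of E K]] by blast
      have U: "\<forall>a\<in>U. \<forall>b\<in>U. a \<noteq> b \<longrightarrow> \<not> same_comp E (nonisolated_in E K) a b"
      proof (intro ballI impI notI)
        fix a b assume ab: "a \<in> U" "b \<in> U" "a \<noteq> b" "same_comp E (nonisolated_in E K) a b"
        have sc: "same_comp E K a b" by (rule same_comp_mono[OF noniso_sub ab(4)])
        then have "a \<in> K" "b \<in> K" unfolding same_comp_def by blast+
        then show False using c2 ab sc unfolding U_def by blast
      qed
      obtain I where I: "I \<subseteq> nonisolated_in E K" "\<forall>x\<in>I. \<forall>y\<in>I. \<not> E x y" "I \<inter> U = {}"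
        "2 * card I = card (nonisolated_in E K)"
        using match_indep[OF sym irr fN acN pm U] by blast
      have IK: "I \<subseteq> K" using I(1) noniso_sub[of E K] by blast
      define J where "J = insert v (isolated_in E K \<union> I)"
      have vJ: "v \<notin> isolated_in E K \<union> I" using vK IK unfolding isolated_in_def by blast
      have fJ: "finite (isolated_in E K \<union> I)" using fK IK unfolding isolated_in_def by (auto intro: finite_subset)
      have cJ: "card J = \<alpha> + 1"
        unfolding J_def using vJ fJ iso_I_card[OF fK I(1)] I(4) cN ciso by simp
      have JV: "J \<subseteq> V" unfolding J_def using vK(2) KV IK unfolding isolated_in_def by blast
      have nv: "\<forall>x\<in>isolated_in E K \<union> I. \<not> E v x" using False I(3) unfolding U_def by blast
      have nv2: "\<forall>x\<in>isolated_in E K \<union> I. \<not> E x v" using nv sym by blast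
      have ii: "\<forall>a\<in>isolated_in E K \<union> I. \<forall>b\<in>isolated_in E K \<union> I. \<not> E a b"
        by (rule iso_I_indep[OF sym IK I(2)])
      have "\<forall>a\<in>J. \<forall>b\<in>J. \<not> E a b"
        unfolding J_def using ii nv nv2 irr by blast
      then have "independent V E J" using JV unfolding independent_def by blast
      then have "card J \<le> \<alpha>" using indep_le[OF G] unfolding \<alpha>_def by blast
      then show False using cJ by simp
    qed
  qed
  then show ?thesis using pre_ext[OF K] unfolding \<alpha>_def by blast
qed

theorem lemma1p1:
  fixes V :: "'a set" and E :: "'a \<Rightarrow> 'a \<Rightarrow> bool" and k :: nat
  assumes "fin_graph V E"
  shows "indep_number V E = k \<longleftrightarrow>
           ((\<exists>K. ext_indep_set V E k K) \<and> (\<forall>k'. k' > k \<longrightarrow> \<not> (\<exists>K. ext_indep_set V E k' K)))"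
proof -
  have bound: "k' \<le> indep_number V E" if "ext_indep_set V E k' K" for k' K
    using ext_pre[OF that] pre_bound[OF assms] by blast
  show ?thesis
  proof
    assume "indep_number V E = k"
    then show "(\<exists>K. ext_indep_set V E k K) \<and> (\<forall>k'. k' > k \<longrightarrow> \<not> (\<exists>K. ext_indep_set V E k' K))"
      using exists_ext[OF assms] bound by (metis not_le)
  next
    assume h: "(\<exists>K. ext_indep_set V E k K) \<and> (\<forall>k'. k' > k \<longrightarrow> \<not> (\<exists>K. ext_indep_set V E k' K))"
    then have "k \<le> indep_number V E" using bound by blast
    moreover have "\<not> indep_number V E > k" using h exists_ext[OF assms] by blast
    ultimately show "indep_number V E = k" by simp
  qed
qed


end
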